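(* Let $q\ge1$ be an integer. Let $T_{q+2}'=\sum_{i,j,k\in\{0,\dots,q+1\},\ i+j+k\equiv q+1 \pmod{q+2}} x_iy_jz_k$ (the structural tensor of $\mathbb Z_{q+2}$ after renaming each $z_k$ as $z_{(k-1)\bmod (q+2)}$), and let $$CW_q=x_0y_0z_{q+1}+x_0y_{q+1}z_0+x_{q+1}y_0z_0+\sum_{k=1}^q\left(x_0y_kz_{q+1-k}+x_ky_0z_{q+1-k}+x_ky_{q+1-k}z_0\right).$$ Then $CW_q$ is a monomial degeneration of $T'_{q+2}$.
   Context: Tensors are trilinear forms in variables $x_0,\dots,x_{q+1}$, $y_0,\dots,y_{q+1}$, $z_0,\dots,z_{q+1}$ with field coefficients; both tensors above have all listed coefficients equal to $1$. For tensors $A,B$ over the same variable sets, $A$ is a monomial degeneration of $B$ if every coefficient of $A$ is either the corresponding coefficient of $B$ or $0$, and there are functions $a,b,c$ from the $x$-, $y$-, $z$-variables respectively to $\mathbb Z$ such that for every term $x_iy_jz_k$ with nonzero coefficient in $B$ we have $a(x_i)+b(y_j)+c(z_k)\ge0$, with equality if and only if the coefficient of $x_iy_jz_k$ in $A$ is nonzero. *)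

theory Defs
  imports Main
begin

text \<open>A tensor in variables x_0..x_{n-1}, y_0..y_{n-1}, z_0..z_{n-1} is represented by its
coefficient function: T i j k is the coefficient of x_i y_j z_k (only i,j,k < n matter).\<close>

type_synonym 'a tensor = "nat \<Rightarrow> nat \<Rightarrow> nat \<Rightarrow> 'a"

definition monomial_degeneration :: "nat \<Rightarrow> 'a::zero tensor \<Rightarrow> 'a tensor \<Rightarrow> bool" where
  "monomial_degeneration n A B \<longleftrightarrow>
     (\<forall>i<n. \<forall>j<n. \<forall>k<n. A i j k = B i j k \<or> A i j k = 0) \<and>
     (\<exists>a b c :: nat \<Rightarrow> int. \<forall>i<n. \<forall>j<n. \<forall>k<n. B i j k \<noteq> 0 \<longrightarrow>
         a i + b j + c k \<ge> 0 \<and> (a i + b j + c k = 0 \<longleftrightarrow> A i j k \<noteq> 0))"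

definition Tprime :: "nat \<Rightarrow> 'a::{zero,one} tensor" where
  "Tprime q i j k = (if i \<le> q+1 \<and> j \<le> q+1 \<and> k \<le> q+1 \<and> (i+j+k) mod (q+2) = (q+1) mod (q+2)
                     then 1 else 0)"

definition CW_support :: "nat \<Rightarrow> (nat \<times> nat \<times> nat) set" where
  "CW_support q = {(0,0,q+1), (0,q+1,0), (q+1,0,0)} \<union>
     (\<Union>k\<in>{1..q}. {(0,k,q+1-k), (k,0,q+1-k), (k,q+1-k,0)})"

definition CW :: "nat \<Rightarrow> 'a::{zero,one} tensor" where
  "CW q i j k = (if (i,j,k) \<in> CW_support q then 1 else 0)"

end

theory Submission
  imports Defs
begin

lemma CW_char: "(i,j,k) \<in> CW_support q \<longleftrightarrow> i+j+k = q+1 \<and> (i=0 \<or> j=0 \<or> k=0)"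
proof
  assume "(i,j,k) \<in> CW_support q" thus "i+j+k = q+1 \<and> (i=0 \<or> j=0 \<or> k=0)"
    unfolding CW_support_def by auto
next
  assume h: "i+j+k = q+1 \<and> (i=0 \<or> j=0 \<or> k=0)"
  show "(i,j,k) \<in> CW_support q"
  proof (cases "i=0")
    case True
    show ?thesis
    proof (cases "j = 0 \<or> j = q+1")
      case True with h \<open>i=0\<close> show ?thesis unfolding CW_support_def by auto
    next
      case False
      hence "j \<in> {1..q}" "k = q+1-j" using h \<open>i=0\<close> by auto
      thus ?thesis unfolding CW_support_def using \<open>i=0\<close> by blast
    qed
  next
    case i: False
    show ?thesis
    proof (cases "j=0")
      case True
      show ?thesis
      proof (cases "i = q+1")
        case True with h \<open>j=0\<close> show ?thesis unfolding CW_support_def by auto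
      next
        case False
        hence "i \<in> {1..q}" "k = q+1-i" using h \<open>j=0\<close> i by auto
        thus ?thesis unfolding CW_support_def using \<open>j=0\<close> by blast
      qed
    next
      case False
      hence "k=0" using h i by auto
      have "i \<in> {1..q}" "j = q+1-i" using h \<open>k=0\<close> i False by auto
      thus ?thesis unfolding CW_support_def using \<open>k=0\<close> by blast
    qed
  qed
qed

lemma T_char: fixes q i j k :: nat shows "i \<le> q+1 \<and> j \<le> q+1 \<and> k \<le> q+1 \<and> (i+j+k) mod (q+2) = (q+1) mod (q+2)
  \<longleftrightarrow> i \<le> q+1 \<and> j \<le> q+1 \<and> k \<le> q+1 \<and> (i+j+k = q+1 \<or> i+j+k = 2*q+3)"
proof -
  have "(i+j+k) mod (q+2) = (q+1) mod (q+2) \<longleftrightarrow> (i+j+k = q+1 \<or> i+j+k = 2*q+3)"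
    if "i+j+k \<le> 3*q+3" for i j k :: nat
  proof -
    let ?s = "i+j+k"
    have m: "(q+1) mod (q+2) = q+1" by simp
    have e: "?s = (?s div (q+2))*(q+2) + ?s mod (q+2)" by (rule div_mult_mod_eq[symmetric])
    have d: "?s div (q+2) < 3"
    proof (rule ccontr)
      assume "\<not> ?s div (q+2) < 3"
      hence "3*(q+2) \<le> (?s div (q+2))*(q+2)" by (intro mult_right_mono) auto
      also have "\<dots> \<le> ?s" by (rule div_times_less_eq_dividend)
      finally show False using that by simp
    qed
    show ?thesis
    proof -
      have r: "?s mod (q+2) < q+2" by simp
      consider "?s div (q+2) = 0" | "?s div (q+2) = 1" | "?s div (q+2) = 2" using d by linarith
      thus ?thesis
      proof cases
        case 1 thus ?thesis using e r m by auto
      next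
        case 2 thus ?thesis using e r m by auto
      next
        case 3 thus ?thesis using e r m that by auto
      qed
    qed
  qed
  note h = this
  show ?thesis
  proof (cases "i \<le> q+1 \<and> j \<le> q+1 \<and> k \<le> q+1")
    case True
    hence "i+j+k \<le> 3*q+3" by linarith
    thus ?thesis using h[of i j k] True by blast
  qed auto
qed

theorem mainTheorem5:
  fixes q :: nat
  assumes "q \<ge> 1"
  shows "monomial_degeneration (q+2) (CW q :: 'a::field tensor) (Tprime q)"
proof -
  define f :: "nat \<Rightarrow> int" where "f i = (if i = 0 then -2 else if i = q+1 then 4 else 1)" for i
  show ?thesis
    unfolding monomial_degeneration_def
  proof (intro conjI allI impI)
    fix i j k assume "i < q+2" "j < q+2" "k < q+2"
    show "(CW q i j k :: 'a) = Tprime q i j k \<or> (CW q i j k :: 'a) = 0"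
      unfolding CW_def Tprime_def CW_char T_char by auto
  next
    show "\<exists>a b c :: nat \<Rightarrow> int. \<forall>i<q+2. \<forall>j<q+2. \<forall>k<q+2. (Tprime q i j k :: 'a) \<noteq> 0 \<longrightarrow>
         a i + b j + c k \<ge> 0 \<and> (a i + b j + c k = 0 \<longleftrightarrow> (CW q i j k :: 'a) \<noteq> 0)"
    proof (intro exI allI impI)
      fix i j k assume b: "i < q+2" "j < q+2" "k < q+2" and t: "(Tprime q i j k :: 'a) \<noteq> 0"
      hence s: "i+j+k = q+1 \<or> i+j+k = 2*q+3"
        unfolding Tprime_def T_char by (auto split: if_splits)
      have cw: "(CW q i j k :: 'a) \<noteq> 0 \<longleftrightarrow> i+j+k = q+1 \<and> (i=0 \<or> j=0 \<or> k=0)"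
        unfolding CW_def CW_char by auto
      show "f i + f j + f k \<ge> 0 \<and> (f i + f j + f k = 0 \<longleftrightarrow> (CW q i j k :: 'a) \<noteq> 0)"
        unfolding cw f_def using s b assms by auto
    qed
  qed
qed

end
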